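(* Let $Q$ be a Foulis quantale. For $u\in Q$ let $\sigma_u\colon[Q]\to[Q]$ be the Sasaki action $\sigma_u(k)=(u\cdot k)^{\perp\perp}$. Then $\sigma_u\in\mathrm{Lin}([Q])$ for every $u$, and the map $h\colon Q\to\mathrm{Lin}([Q])$, $h(u)=\sigma_u$, is a homomorphism of Foulis quantales, where $\mathrm{Lin}([Q])$ carries the Foulis quantale structure given by composition, pointwise joins, identity unit, involution $f\mapsto f^\star$, and $[f]=\pi_{f^\star(1)^\perp}$. In particular $h(u^* )=h(u)^\star$ and $h(u^\perp)=h(u)^\perp$ for all $u\in Q$.
   Context: A quantale is a complete lattice $Q$ (join $\bigsqcup$) with associative multiplication distributing over arbitrary joins on both sides; unital if it has a two-sided unit $e$; involutive if it has a join-preserving semigroup involution $*$. A Foulis quantale is a unital involutive quantale $Q$ with an endomap $[-]\colon Q\to Q$ such that: (a) $[s]\cdot[s]=[s]=[s]^*$; (b) $[e]=0$; (c) $s\cdot x=0$ iff $x=[s]\cdot y$ for some $y\in Q$. For $t\in Q$ put $t^\perp=[t^*]$. The set $[Q]=\{[t]\mid t\in Q\}$ is a complete orthomodular lattice with order $k_1\le k_2$ iff $k_1=k_2\cdot k_1$, top $[0]$, orthocomplement $k^\perp=[k]$, joins $\bigvee S=[[\bigsqcup S]]$. For a complete orthomodular lattice $X$, write $x\perp y$ iff $x\le y^\perp$; a map $f\colon X\to X$ is linear if there is $g$ with $f(x)\perp y\iff x\perp g(y)$ for all $x,y$ (such $g$ is unique, denoted $f^\star$); $\mathrm{Lin}(X)$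 is the set of linear maps; for $a\in X$ the Sasaki projection is $\pi_a(y)=a\wedge(a^\perp\vee y)$. A homomorphism of Foulis quantales is a map preserving arbitrary joins, binary multiplication, unit, involution, and $(-)^\perp$. *)

theory Defs
  imports Main
begin

text \<open>A Foulis quantale on a complete lattice type 'q (order and Sup are the
lattice ones), given by multiplication m, unit e, involution invo and the
Foulis map brk (written [-] in the paper).\<close>

definition quantale :: "('q::complete_lattice \<Rightarrow> 'q \<Rightarrow> 'q) \<Rightarrow> bool" where
  "quantale m \<longleftrightarrow>
     (\<forall>a b c. m (m a b) c = m a (m b c)) \<and>
     (\<forall>a A. m a (Sup A) = Sup ((\<lambda>x. m a x) ` A)) \<and>
     (\<forall>a A. m (Sup A) a = Sup ((\<lambda>x. m x a) ` A))"

definition unital_involutive_quantale ::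
  "('q::complete_lattice \<Rightarrow> 'q \<Rightarrow> 'q) \<Rightarrow> 'q \<Rightarrow> ('q \<Rightarrow> 'q) \<Rightarrow> bool" where
  "unital_involutive_quantale m e invo \<longleftrightarrow>
     quantale m \<and>
     (\<forall>a. m e a = a \<and> m a e = a) \<and>
     (\<forall>a. invo (invo a) = a) \<and>
     (\<forall>a b. invo (m a b) = m (invo b) (invo a)) \<and>
     (\<forall>A. invo (Sup A) = Sup (invo ` A))"

definition foulis_quantale ::
  "('q::complete_lattice \<Rightarrow> 'q \<Rightarrow> 'q) \<Rightarrow> 'q \<Rightarrow> ('q \<Rightarrow> 'q) \<Rightarrow> ('q \<Rightarrow> 'q) \<Rightarrow> bool" where
  "foulis_quantale m e invo brk \<longleftrightarrow>
     unital_involutive_quantale m e invo \<and>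
     (\<forall>s. m (brk s) (brk s) = brk s \<and> brk s = invo (brk s)) \<and>
     brk e = bot \<and>
     (\<forall>s x. m s x = bot \<longleftrightarrow> (\<exists>y. x = m (brk s) y))"

definition fperp :: "('q \<Rightarrow> 'q) \<Rightarrow> ('q \<Rightarrow> 'q) \<Rightarrow> 'q \<Rightarrow> 'q" where
  "fperp invo brk t = brk (invo t)"

definition projs :: "('q \<Rightarrow> 'q) \<Rightarrow> 'q set" where
  "projs brk = range brk"

definition ple :: "('q \<Rightarrow> 'q \<Rightarrow> 'q) \<Rightarrow> 'q \<Rightarrow> 'q \<Rightarrow> bool" where
  "ple m k1 k2 \<longleftrightarrow> k1 = m k2 k1"

definition ptop :: "('q::complete_lattice \<Rightarrow> 'q) \<Rightarrow> 'q" where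
  "ptop brk = brk bot"

definition poc :: "('q \<Rightarrow> 'q) \<Rightarrow> 'q \<Rightarrow> 'q" where
  "poc brk k = brk k"

definition pJoin :: "('q::complete_lattice \<Rightarrow> 'q) \<Rightarrow> 'q set \<Rightarrow> 'q" where
  "pJoin brk S = brk (brk (Sup S))"

definition pmeet :: "('q::complete_lattice \<Rightarrow> 'q) \<Rightarrow> 'q \<Rightarrow> 'q \<Rightarrow> 'q" where
  "pmeet brk a b = poc brk (pJoin brk {poc brk a, poc brk b})"

definition porth :: "('q \<Rightarrow> 'q \<Rightarrow> 'q) \<Rightarrow> ('q \<Rightarrow> 'q) \<Rightarrow> 'q \<Rightarrow> 'q \<Rightarrow> bool" where
  "porth m brk x y \<longleftrightarrow> ple m x (poc brk y)"

definition sasaki :: "('q::complete_lattice \<Rightarrow> 'q) \<Rightarrow> 'q \<Rightarrow> 'q \<Rightarrow> 'q" where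
  "sasaki brk a y = pmeet brk a (pJoin brk {poc brk a, y})"

text \<open>Maps [Q] -> [Q] are represented by functions 'q => 'q; only their values on
[Q] matter. f is linear (f \<in> Lin([Q])) iff it maps [Q] into [Q] and has an adjoint.\<close>
definition is_adjoint :: "('q \<Rightarrow> 'q \<Rightarrow> 'q) \<Rightarrow> ('q \<Rightarrow> 'q) \<Rightarrow> ('q \<Rightarrow> 'q) \<Rightarrow> ('q \<Rightarrow> 'q) \<Rightarrow> bool" where
  "is_adjoint m brk f g \<longleftrightarrow>
     (\<forall>y\<in>projs brk. g y \<in> projs brk) \<and>
     (\<forall>x\<in>projs brk. \<forall>y\<in>projs brk. porth m brk (f x) y \<longleftrightarrow> porth m brk x (g y))"

definition linear_map :: "('q \<Rightarrow> 'q \<Rightarrow> 'q) \<Rightarrow> ('q \<Rightarrow> 'q) \<Rightarrow> ('q \<Rightarrow> 'q) \<Rightarrow> bool" where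
  "linear_map m brk f \<longleftrightarrow>
     (\<forall>x\<in>projs brk. f x \<in> projs brk) \<and> (\<exists>g. is_adjoint m brk f g)"

text \<open>The (unique on [Q]) adjoint f^star.\<close>
definition lin_star :: "('q \<Rightarrow> 'q \<Rightarrow> 'q) \<Rightarrow> ('q \<Rightarrow> 'q) \<Rightarrow> ('q \<Rightarrow> 'q) \<Rightarrow> 'q \<Rightarrow> 'q" where
  "lin_star m brk f = (SOME g. is_adjoint m brk f g)"

definition lin_Join :: "('q::complete_lattice \<Rightarrow> 'q) \<Rightarrow> ('q \<Rightarrow> 'q) set \<Rightarrow> 'q \<Rightarrow> 'q" where
  "lin_Join brk F = (\<lambda>k. pJoin brk ((\<lambda>f. f k) ` F))"

definition lin_brk :: "('q::complete_lattice \<Rightarrow> 'q \<Rightarrow> 'q) \<Rightarrow> ('q \<Rightarrow> 'q) \<Rightarrow> ('q \<Rightarrow> 'q) \<Rightarrow> 'q \<Rightarrow> 'q" where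
  "lin_brk m brk f = sasaki brk (poc brk (lin_star m brk f (ptop brk)))"

definition lin_perp :: "('q::complete_lattice \<Rightarrow> 'q \<Rightarrow> 'q) \<Rightarrow> ('q \<Rightarrow> 'q) \<Rightarrow> ('q \<Rightarrow> 'q) \<Rightarrow> 'q \<Rightarrow> 'q" where
  "lin_perp m brk f = lin_brk m brk (lin_star m brk f)"

definition sasaki_action :: "('q \<Rightarrow> 'q \<Rightarrow> 'q) \<Rightarrow> ('q \<Rightarrow> 'q) \<Rightarrow> ('q \<Rightarrow> 'q) \<Rightarrow> 'q \<Rightarrow> 'q \<Rightarrow> 'q" where
  "sasaki_action m invo brk u k = fperp invo brk (fperp invo brk (m u k))"

end

theory Submission
  imports Defs
begin

locale FQ =
  fixes m :: "'q::complete_lattice \<Rightarrow> 'q \<Rightarrow> 'q" (infixl "\<odot>" 70)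
    and e :: 'q and invo :: "'q \<Rightarrow> 'q" and brk :: "'q \<Rightarrow> 'q"
  assumes fq: "foulis_quantale m e invo brk"
begin

lemma assoc: "(a \<odot> b) \<odot> c = a \<odot> (b \<odot> c)"
  using fq unfolding foulis_quantale_def unital_involutive_quantale_def quantale_def by blast
lemma distl: "a \<odot> Sup A = Sup ((\<lambda>x. a \<odot> x) ` A)"
  using fq unfolding foulis_quantale_def unital_involutive_quantale_def quantale_def by blast
lemma distr: "Sup A \<odot> a = Sup ((\<lambda>x. x \<odot> a) ` A)"
  using fq unfolding foulis_quantale_def unital_involutive_quantale_def quantale_def by blast
lemma unitl: "e \<odot> a = a"
  using fq unfolding foulis_quantale_def unital_involutive_quantale_def by blast
lemma unitr: "a \<odot> e = a"
  using fq unfolding foulis_quantale_def unital_involutive_quantale_def by blast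
lemma invo_invo[simp]: "invo (invo a) = a"
  using fq unfolding foulis_quantale_def unital_involutive_quantale_def by blast
lemma invo_mult: "invo (a \<odot> b) = invo b \<odot> invo a"
  using fq unfolding foulis_quantale_def unital_involutive_quantale_def by blast
lemma invo_Sup: "invo (Sup A) = Sup (invo ` A)"
  using fq unfolding foulis_quantale_def unital_involutive_quantale_def by blast
lemma brk_idem: "brk s \<odot> brk s = brk s"
  using fq unfolding foulis_quantale_def by blast
lemma brk_sa[simp]: "invo (brk s) = brk s"
  using fq unfolding foulis_quantale_def by metis
lemma ann: "s \<odot> x = bot \<longleftrightarrow> (\<exists>y. x = brk s \<odot> y)"
  using fq unfolding foulis_quantale_def by blast

lemma zero_l[simp]: "bot \<odot> x = bot" using distr[of "{}"] by simp
lemma zero_r[simp]: "x \<odot> bot = bot" using distl[of x "{}"] by simp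
lemma invo_bot[simp]: "invo bot = bot" using invo_Sup[of "{}"] by simp
lemma invo_eq_bot: "invo x = bot \<longleftrightarrow> x = bot" by (metis invo_bot invo_invo)
lemma invo_sup: "invo (sup a b) = sup (invo a) (invo b)" using invo_Sup[of "{a,b}"] by simp
lemma mult_sup_l: "a \<odot> sup x y = sup (a \<odot> x) (a \<odot> y)" using distl[of a "{x,y}"] by simp
lemma mult_sup_r: "sup x y \<odot> a = sup (x \<odot> a) (y \<odot> a)" using distr[of "{x,y}" a] by simp

lemma F2: "s \<odot> x = bot \<longleftrightarrow> x = brk s \<odot> x"
proof
  assume "s \<odot> x = bot"
  then obtain y where "x = brk s \<odot> y" using ann by blast
  then show "x = brk s \<odot> x" by (metis assoc brk_idem)
next
  assume "x = brk s \<odot> x" then show "s \<odot> x = bot" using ann by blast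
qed

lemma F3: "s \<odot> brk s = bot" using F2 brk_idem by metis

lemma swap: "x \<odot> y = bot \<longleftrightarrow> invo y \<odot> invo x = bot"
  by (metis invo_eq_bot invo_mult)

lemma F4: "brk s \<odot> invo s = bot"
  using swap[of s "brk s"] F3 by simp

lemma F5: "x \<odot> y = bot \<longleftrightarrow> x = x \<odot> brk (invo y)"
proof -
  have "x \<odot> y = bot \<longleftrightarrow> invo x = brk (invo y) \<odot> invo x" using swap F2 by metis
  also have "\<dots> \<longleftrightarrow> x = x \<odot> brk (invo y)"
    by (metis invo_invo invo_mult brk_sa)
  finally show ?thesis .
qed

lemma F6[simp]: "brk (brk (brk s)) = brk s"
proof -
  have s1: "s = s \<odot> brk (brk s)" using F5[of s "brk s"] F3 by simp
  have eqv: "s \<odot> y = bot \<longleftrightarrow> brk (brk s) \<odot> y = bot" for y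
  proof
    assume "brk (brk s) \<odot> y = bot"
    then show "s \<odot> y = bot" using s1 by (metis assoc zero_r)
  next
    assume "s \<odot> y = bot"
    then have "y = brk s \<odot> y" using F2 by blast
    moreover have "brk (brk s) \<odot> brk s = bot" using F4[of "brk s"] by simp
    ultimately show "brk (brk s) \<odot> y = bot" by (metis assoc zero_l)
  qed
  let ?P = "brk (brk (brk s))"
  have e2: "y = brk s \<odot> y \<longleftrightarrow> y = ?P \<odot> y" for y using eqv F2 by metis
  have a: "brk s = ?P \<odot> brk s" using e2 brk_idem by metis
  have b: "?P = brk s \<odot> ?P" using e2 brk_idem by metis
  have "brk s = invo (?P \<odot> brk s)" using a by (metis brk_sa)
  also have "\<dots> = brk s \<odot> ?P" by (simp add: invo_mult)
  finally show ?thesis using b by simp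
qed

lemma closed: "k \<in> range brk \<Longrightarrow> brk (brk k) = k" by auto
lemma sa: "k \<in> range brk \<Longrightarrow> invo k = k" by auto

lemma L1: "a \<odot> brk (brk (invo t)) = bot \<longleftrightarrow> a \<odot> t = bot"
proof -
  have t1: "t = brk (brk (invo t)) \<odot> t" using F4[of "invo t"] F2 by simp
  show ?thesis
  proof
    assume "a \<odot> brk (brk (invo t)) = bot"
    then show "a \<odot> t = bot" using t1 by (metis assoc zero_l)
  next
    assume "a \<odot> t = bot"
    then have "a = a \<odot> brk (invo t)" using F5 by blast
    then show "a \<odot> brk (brk (invo t)) = bot" using F3 by (metis assoc zero_r)
  qed
qed

lemma EQ:
  assumes "p \<in> range brk" "q \<in> range brk" "\<And>a. a \<odot> p = bot \<longleftrightarrow> a \<odot> q = bot"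
  shows "p = q"
proof -
  have "brk p \<odot> p = bot" using F4[of p] sa[OF assms(1)] by simp
  then have "brk p \<odot> q = bot" using assms(3) by blast
  then have 1: "q = p \<odot> q" using F2 closed[OF assms(1)] by metis
  have "brk q \<odot> q = bot" using F4[of q] sa[OF assms(2)] by simp
  then have "brk q \<odot> p = bot" using assms(3) by blast
  then have 2: "p = q \<odot> p" using F2 closed[OF assms(2)] by metis
  have "p = invo (q \<odot> p)" using 2 sa[OF assms(1)] by metis
  also have "\<dots> = p \<odot> q" using sa[OF assms(1)] sa[OF assms(2)] by (simp add: invo_mult)
  finally show ?thesis using 1 by simp
qed

lemma porth_iff: "porth m brk x y \<longleftrightarrow> y \<odot> x = bot"
  unfolding porth_def ple_def poc_def using F2 by metis

abbreviation "h \<equiv> sasaki_action m invo brk"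

lemma h_eq: "h u k = brk (brk (invo (u \<odot> k)))"
  by (simp add: sasaki_action_def fperp_def)

lemma h_range: "h u k \<in> range brk" by (simp add: h_eq)

lemma h_ann: "a \<odot> h u k = bot \<longleftrightarrow> a \<odot> u \<odot> k = bot"
  by (simp add: h_eq L1 assoc)

lemma adj_h: "is_adjoint m brk (h u) (h (invo u))"
  unfolding is_adjoint_def projs_def
proof (intro conjI ballI)
  fix y show "h (invo u) y \<in> range brk" by (rule h_range)
next
  fix x y assume x: "x \<in> range brk" and y: "y \<in> range brk"
  have "porth m brk (h u x) y \<longleftrightarrow> y \<odot> u \<odot> x = bot" by (simp add: porth_iff h_ann)
  also have "\<dots> \<longleftrightarrow> invo x \<odot> invo u \<odot> y = bot"
    using swap[of "y \<odot> u" x] sa[OF y] by (simp add: invo_mult assoc)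
  also have "\<dots> \<longleftrightarrow> invo x \<odot> h (invo u) y = bot" by (simp add: h_ann)
  also have "\<dots> \<longleftrightarrow> porth m brk x (h (invo u) y)"
    using swap[of "h (invo u) y" x] by (simp add: porth_iff h_eq)
  finally show "porth m brk (h u x) y = porth m brk x (h (invo u) y)" .
qed

lemma adj_cong: "(\<And>x. x \<in> projs brk \<Longrightarrow> f x = f' x) \<Longrightarrow> is_adjoint m brk f g \<Longrightarrow> is_adjoint m brk f' g"
  by (simp add: is_adjoint_def)

lemma adj_unique:
  assumes "is_adjoint m brk f g1" "is_adjoint m brk f g2" "y \<in> projs brk"
  shows "g1 y = g2 y"
proof -
  let ?p = "g1 y" and ?q = "g2 y"
  have p: "?p \<in> range brk" and q: "?q \<in> range brk"
    using assms unfolding is_adjoint_def projs_def by auto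
  have iff: "?p \<odot> x = bot \<longleftrightarrow> ?q \<odot> x = bot" if xr: "x \<in> range brk" for x
  proof -
    have "porth m brk x ?p \<longleftrightarrow> porth m brk x ?q"
      using assms xr unfolding is_adjoint_def projs_def by blast
    then show ?thesis by (simp add: porth_iff)
  qed
  have "?q \<odot> brk ?p = bot" using iff[of "brk ?p"] F3 by auto
  then have a: "brk ?p = brk ?q \<odot> brk ?p" using F2 by blast
  have "?p \<odot> brk ?q = bot" using iff[of "brk ?q"] F3 by auto
  then have b: "brk ?q = brk ?p \<odot> brk ?q" using F2 by blast
  have "brk ?p = invo (brk ?q \<odot> brk ?p)" using a by (metis brk_sa)
  also have "\<dots> = brk ?p \<odot> brk ?q" by (simp add: invo_mult)
  finally have "brk ?p = brk ?q" using b by simp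
  then show ?thesis using closed[OF p] closed[OF q] by metis
qed

lemma lin_star_h: "y \<in> projs brk \<Longrightarrow> lin_star m brk (h u) y = h (invo u) y"
  unfolding lin_star_def
  by (rule adj_unique[OF someI[of "is_adjoint m brk (h u)", OF adj_h] adj_h])

lemma lin_star2: "y \<in> projs brk \<Longrightarrow> lin_star m brk (lin_star m brk (h u)) y = h u y"
proof -
  have A: "is_adjoint m brk (lin_star m brk (h u)) (h u)"
    using adj_cong[OF _ adj_h[of "invo u"]] lin_star_h by simp
  assume "y \<in> projs brk"
  then show ?thesis unfolding lin_star_def[of m brk "lin_star m brk (h u)"]
    by (rule adj_unique[OF someI[of "is_adjoint m brk (lin_star m brk (h u))", OF A] A])
qed

lemma brk_bot: "brk bot = e"
proof -
  have "e = brk bot \<odot> e" using F2[of bot e] by simp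
  then show ?thesis by (simp add: unitr)
qed

lemma sasaki_eq:
  assumes pP: "p \<in> range brk" and kP: "k \<in> range brk"
  shows "h p k = sasaki brk p k"
proof -
  define r where "r = brk p"
  define X where "X = sup r k"
  define q where "q = brk (brk X)"
  define Y where "Y = sup r (brk X)"
  define \<sigma> where "\<sigma> = h p k"
  have pi: "sasaki brk p k = brk Y"
    by (simp add: sasaki_def pmeet_def pJoin_def poc_def Y_def X_def r_def)
  have invp: "invo p = p" and invk: "invo k = k" using sa pP kP by auto
  have brkr: "brk r = p" using closed[OF pP] r_def by simp
  have invX: "invo X = X" using invk by (simp add: X_def r_def invo_sup)
  have invY: "invo Y = Y" by (simp add: Y_def r_def invo_sup)
  have A: "brk Y \<odot> b = b \<longleftrightarrow> p \<odot> b = b \<and> q \<odot> b = b" for b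
  proof -
    have "brk Y \<odot> b = b \<longleftrightarrow> brk (brk Y) \<odot> b = bot" using F2[of "brk (brk Y)" b] by auto
    also have "\<dots> \<longleftrightarrow> invo b \<odot> brk (brk (invo Y)) = bot" using swap invY by (metis brk_sa)
    also have "\<dots> \<longleftrightarrow> invo b \<odot> Y = bot" by (rule L1)
    also have "\<dots> \<longleftrightarrow> invo b \<odot> r = bot \<and> invo b \<odot> brk X = bot" by (simp add: Y_def mult_sup_l)
    also have "\<dots> \<longleftrightarrow> r \<odot> b = bot \<and> brk X \<odot> b = bot" using swap
      by (metis brk_sa invo_invo r_def)
    also have "\<dots> \<longleftrightarrow> p \<odot> b = b \<and> q \<odot> b = b" using F2 brkr q_def by metis
    finally show ?thesis .
  qed
  have sig: "\<sigma> = brk (brk (invo (p \<odot> k)))" by (simp add: \<sigma>_def h_eq)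
  have sigR: "\<sigma> \<in> range brk" by (simp add: sig)
  have rp: "r \<odot> p = bot" using F4[of p] invp r_def by simp
  have Xsig1: "brk X \<odot> r = bot" and Xsig2: "brk X \<odot> k = bot"
    using F4[of X] invX by (simp_all add: X_def mult_sup_l)
  have Xp: "brk X = brk X \<odot> p" using F5 Xsig1 brkr r_def by (metis brk_sa)
  have ps: "p \<odot> \<sigma> = \<sigma>"
  proof -
    have "r \<odot> \<sigma> = bot" unfolding \<sigma>_def h_ann using rp by (metis assoc zero_l)
    then show ?thesis using F2 brkr by metis
  qed
  have qs: "q \<odot> \<sigma> = \<sigma>"
  proof -
    have "brk X \<odot> \<sigma> = bot" unfolding \<sigma>_def h_ann using Xp Xsig2 by metis
    then show ?thesis using F2 q_def by metis
  qed
  have B: "\<sigma> \<odot> b = b \<longleftrightarrow> p \<odot> b = b \<and> q \<odot> b = b" for b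
  proof
    assume "\<sigma> \<odot> b = b"
    then show "p \<odot> b = b \<and> q \<odot> b = b" using ps qs by (metis assoc)
  next
    assume hb: "p \<odot> b = b \<and> q \<odot> b = b"
    define z where "z = brk \<sigma>"
    have z2: "z = brk (invo (p \<odot> k))" by (simp add: z_def sig)
    have kpz: "k \<odot> (p \<odot> z) = bot" using F3[of "invo (p \<odot> k)"] z2
      by (simp add: invo_mult invp invk assoc)
    have rpz: "r \<odot> (p \<odot> z) = bot" using rp by (metis assoc zero_l)
    have "X \<odot> (p \<odot> z) = bot" using kpz rpz by (simp add: X_def mult_sup_r)
    then have pz: "p \<odot> z = brk X \<odot> (p \<odot> z)" using F2 by blast
    have ib1: "invo b = invo b \<odot> p" using hb invp by (metis invo_mult)
    have ib2: "invo b = invo b \<odot> q" using hb q_def by (metis invo_mult brk_sa)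
    have qX: "q \<odot> brk X = bot" using F3[of q] q_def by simp
    have "invo b \<odot> z = invo b \<odot> brk X \<odot> (p \<odot> z)" using ib1 pz by (metis assoc)
    also have "\<dots> = bot" using ib2 qX by (metis assoc zero_r zero_l)
    finally have "invo b \<odot> z = bot" .
    then have "z \<odot> b = bot" using swap z_def by (metis brk_sa invo_invo)
    then have "b = brk z \<odot> b" using F2 by blast
    then show "\<sigma> \<odot> b = b" using z_def closed[OF sigR] by simp
  qed
  have s2: "\<sigma> \<odot> \<sigma> = \<sigma>" using sig brk_idem by simp
  have "brk Y \<odot> \<sigma> = \<sigma>" using A B s2 by blast
  moreover have "\<sigma> \<odot> brk Y = brk Y" using A B brk_idem by blast
  moreover have "invo \<sigma> = \<sigma>" using sig by simp
  ultimately have "\<sigma> = brk Y" by (metis invo_mult brk_sa)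
  then show ?thesis using pi \<sigma>_def by simp
qed

end

theorem mainTheorem8:
  fixes m :: "'q::complete_lattice \<Rightarrow> 'q \<Rightarrow> 'q" and e :: 'q
    and invo :: "'q \<Rightarrow> 'q" and brk :: "'q \<Rightarrow> 'q"
  assumes "foulis_quantale m e invo brk"
  defines "h \<equiv> sasaki_action m invo brk"
  shows "(\<forall>u. linear_map m brk (h u))
    \<and> (\<forall>A. \<forall>k\<in>projs brk. h (Sup A) k = lin_Join brk (h ` A) k)
    \<and> (\<forall>u v. \<forall>k\<in>projs brk. h (m u v) k = (h u \<circ> h v) k)
    \<and> (\<forall>k\<in>projs brk. h e k = id k)
    \<and> (\<forall>u. \<forall>k\<in>projs brk. h (invo u) k = lin_star m brk (h u) k)
    \<and> (\<forall>u. \<forall>k\<in>projs brk. h (fperp invo brk u) k = lin_perp m brk (h u) k)"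
proof -
  interpret FQ m e invo brk using assms(1) by unfold_locales
  have 1: "\<forall>u. linear_map m brk (h u)"
    unfolding linear_map_def h_def projs_def using adj_h h_range by blast
  have 2: "h (Sup A) k = lin_Join brk (h ` A) k" if "k \<in> projs brk" for A k
  proof -
    define S where "S = (SUP u\<in>A. h u k)"
    have invS: "invo S = S" by (simp add: S_def invo_Sup image_image h_def h_eq)
    have im: "(\<lambda>f. f k) ` h ` A = (\<lambda>u. h u k) ` A" by auto
    have r: "lin_Join brk (h ` A) k = brk (brk (invo S))"
      by (simp only: lin_Join_def pJoin_def im S_def[symmetric] invS)
    have ann: "m a (sasaki_action m invo brk (Sup A) k) = bot \<longleftrightarrow> m a (brk (brk (invo S))) = bot" for a
    proof -
      have "m a (sasaki_action m invo brk (Sup A) k) = bot \<longleftrightarrow> (\<forall>u\<in>A. m (m a u) k = bot)"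
        by (simp add: h_ann distr assoc distl image_image SUP_bot_conv)
      also have "\<dots> \<longleftrightarrow> m a S = bot"
        by (simp add: S_def distl image_image SUP_bot_conv h_ann h_def)
      also have "\<dots> \<longleftrightarrow> m a (brk (brk (invo S))) = bot" by (simp add: L1)
      finally show ?thesis .
    qed
    have "sasaki_action m invo brk (Sup A) k = brk (brk (invo S))"
      by (rule EQ[OF h_range _ ann]) simp
    then show ?thesis using r h_def by simp
  qed
  have 3: "h (m u v) k = (h u \<circ> h v) k" for u v k
    unfolding h_def comp_def
    by (rule EQ) (simp_all add: h_range h_ann assoc[symmetric])
  have 4: "h e k = id k" if "k \<in> projs brk" for k
    unfolding h_def id_def
    by (rule EQ) (use that in \<open>simp_all add: h_range h_ann unitr projs_def\<close>)
  have 5: "h (invo u) k = lin_star m brk (h u) k" if "k \<in> projs brk" for u k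
    using lin_star_h[OF that] h_def by simp
  have 6: "h (fperp invo brk u) k = lin_perp m brk (h u) k" if "k \<in> projs brk" for u k
  proof -
    have pt: "ptop brk \<in> projs brk" by (simp add: ptop_def projs_def)
    have "lin_perp m brk (h u) k = sasaki brk (poc brk (sasaki_action m invo brk u e)) k"
      unfolding lin_perp_def lin_brk_def h_def using lin_star2[OF pt] by (simp add: ptop_def brk_bot)
    also have "poc brk (sasaki_action m invo brk u e) = fperp invo brk u"
      by (simp add: poc_def h_eq unitr fperp_def)
    also have "sasaki brk (fperp invo brk u) k = h (fperp invo brk u) k"
      unfolding h_def using that by (intro sasaki_eq[symmetric]) (auto simp: fperp_def projs_def)
    finally show ?thesis by simp
  qed
  show ?thesis using 1 2 3 4 5 6 by blast
qed

end
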